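(* Let $A=\sum_{i=1}^m e_ia_i^T$ be a real $m\times n$ matrix with rows $a_1,\dots,a_m\in\mathbb R^n$, and define $A_4=\sum_{i=1}^m a_i^{\otimes4}\in(\mathbb R^n)^{\otimes4}$, $A_3=\sum_{i=1}^m a_i\otimes a_i\otimes e_i\in\mathbb R^n\otimes\mathbb R^n\otimes\mathbb R^m$, and $A_{2,2}=\sum_{i=1}^m a_ia_i^T\otimes a_ia_i^T$, an operator on $(\mathbb R^n)^{\otimes2}$. Then \[\|A\|_{2\to4}^4=\|A_4\|_{\rm inj}=\|A_3\|_{\rm inj}^2=\|A_4\|_{{\rm inj}[\mathbb C]}=\|A_3\|_{{\rm inj}[\mathbb C]}^2=h_{\mathrm{Sep}^2(\mathbb R^n)}(A_{2,2})=h_{\mathrm{Sep}^2(\mathbb C^n)}(A_{2,2}).\]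
   Context: In this statement all norms and inner products are counting (unnormalized) ones: $\|x\|_p=(\sum_i|x_i|^p)^{1/p}$, $\langle x,y\rangle=\sum_i \bar x_iy_i$, $\|A\|_{2\to4}=\max_{x\ne0}\|Ax\|_4/\|x\|_2$ over $x\in\mathbb R^n$, and $e_i$ is the $i$-th standard basis vector. For a tensor $T\in V_1\otimes\cdots\otimes V_r$ of real spaces, $\|T\|_{\rm inj}=\max|\langle T,x_1\otimes\cdots\otimes x_r\rangle|$ over real unit vectors $x_j\in V_j$, and $\|T\|_{{\rm inj}[\mathbb C]}$ is the same maximum over complex unit vectors $x_j$. For $\mathbb F\in\{\mathbb R,\mathbb C\}$, $\mathrm{Sep}^2(\mathbb F^n)=\mathrm{conv}\{v_1v_1^*\otimes v_2v_2^*: v_1,v_2\in\mathbb F^n,\ \|v_1\|_2=\|v_2\|_2=1\}$, and for a bounded convex set $K$ of matrices, $h_K(X)=\max_{Y\in K}|\langle X,Y\rangle|$ with $\langle X,Y\rangle=\mathrm{tr}(X^*Y)$. *)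

theory Defs
  imports "HOL-Analysis.Analysis"
begin

definition l4norm :: "real^'m \<Rightarrow> real" where
  "l4norm v = (\<Sum>i\<in>UNIV. \<bar>v $ i\<bar> ^ 4) powr (1/4)"

definition norm_2to4 :: "real^'n^'m \<Rightarrow> real" where
  "norm_2to4 A = (SUP x\<in>{x::real^'n. x \<noteq> 0}. l4norm (A *v x) / norm x)"

definition inj4 :: "('a::finite \<Rightarrow> 'b::finite \<Rightarrow> 'c::finite \<Rightarrow> 'd::finite \<Rightarrow> real) \<Rightarrow> real" where
  "inj4 T = (SUP (x1,x2,x3,x4)\<in>{(x1::real^'a,x2::real^'b,x3::real^'c,x4::real^'d).
      norm x1 = 1 \<and> norm x2 = 1 \<and> norm x3 = 1 \<and> norm x4 = 1}.
      \<bar>\<Sum>j1\<in>UNIV. \<Sum>j2\<in>UNIV. \<Sum>j3\<in>UNIV. \<Sum>j4\<in>UNIV.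
         T j1 j2 j3 j4 * x1$j1 * x2$j2 * x3$j3 * x4$j4\<bar>)"

definition inj4C :: "('a::finite \<Rightarrow> 'b::finite \<Rightarrow> 'c::finite \<Rightarrow> 'd::finite \<Rightarrow> real) \<Rightarrow> real" where
  "inj4C T = (SUP (x1,x2,x3,x4)\<in>{(x1::complex^'a,x2::complex^'b,x3::complex^'c,x4::complex^'d).
      norm x1 = 1 \<and> norm x2 = 1 \<and> norm x3 = 1 \<and> norm x4 = 1}.
      cmod (\<Sum>j1\<in>UNIV. \<Sum>j2\<in>UNIV. \<Sum>j3\<in>UNIV. \<Sum>j4\<in>UNIV.
         cnj (complex_of_real (T j1 j2 j3 j4)) * x1$j1 * x2$j2 * x3$j3 * x4$j4))"

definition inj3 :: "('a::finite \<Rightarrow> 'b::finite \<Rightarrow> 'c::finite \<Rightarrow> real) \<Rightarrow> real" where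
  "inj3 T = (SUP (x1,x2,x3)\<in>{(x1::real^'a,x2::real^'b,x3::real^'c).
      norm x1 = 1 \<and> norm x2 = 1 \<and> norm x3 = 1}.
      \<bar>\<Sum>j1\<in>UNIV. \<Sum>j2\<in>UNIV. \<Sum>j3\<in>UNIV. T j1 j2 j3 * x1$j1 * x2$j2 * x3$j3\<bar>)"

definition inj3C :: "('a::finite \<Rightarrow> 'b::finite \<Rightarrow> 'c::finite \<Rightarrow> real) \<Rightarrow> real" where
  "inj3C T = (SUP (x1,x2,x3)\<in>{(x1::complex^'a,x2::complex^'b,x3::complex^'c).
      norm x1 = 1 \<and> norm x2 = 1 \<and> norm x3 = 1}.
      cmod (\<Sum>j1\<in>UNIV. \<Sum>j2\<in>UNIV. \<Sum>j3\<in>UNIV.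
         cnj (complex_of_real (T j1 j2 j3)) * x1$j1 * x2$j2 * x3$j3))"

definition tensA4 :: "real^'n::finite^'m::finite \<Rightarrow> 'n \<Rightarrow> 'n \<Rightarrow> 'n \<Rightarrow> 'n \<Rightarrow> real" where
  "tensA4 A j1 j2 j3 j4 = (\<Sum>i\<in>UNIV. A$i$j1 * A$i$j2 * A$i$j3 * A$i$j4)"

definition tensA3 :: "real^'n::finite^'m::finite \<Rightarrow> 'n \<Rightarrow> 'n \<Rightarrow> 'm \<Rightarrow> real" where
  "tensA3 A j1 j2 k = (\<Sum>i\<in>UNIV. A$i$j1 * A$i$j2 * (if k = i then 1 else 0))"

text \<open>Operators on F^n (x) F^n as matrices indexed by pairs; the Kronecker product
  convention (X (x) Y)_{(j1,j2),(k1,k2)} = X_{j1 k1} Y_{j2 k2}.\<close>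
definition opA22 :: "real^'n::finite^'m::finite \<Rightarrow> real^('n\<times>'n)^('n\<times>'n)" where
  "opA22 A = (\<chi> p q. \<Sum>i\<in>UNIV. (A$i$(fst p) * A$i$(fst q)) * (A$i$(snd p) * A$i$(snd q)))"

definition SepR :: "(real^('n::finite\<times>'n)^('n\<times>'n)) set" where
  "SepR = convex hull {(\<chi> p q. (v1$(fst p) * v1$(fst q)) * (v2$(snd p) * v2$(snd q)))
       | v1 v2 :: real^'n. norm v1 = 1 \<and> norm v2 = 1}"

definition SepC :: "(complex^('n::finite\<times>'n)^('n\<times>'n)) set" where
  "SepC = convex hull {(\<chi> p q. (v1$(fst p) * cnj (v1$(fst q))) * (v2$(snd p) * cnj (v2$(snd q))))
       | v1 v2 :: complex^'n. norm v1 = 1 \<and> norm v2 = 1}"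

definition hR :: "(real^'p^'p) set \<Rightarrow> real^'p^'p \<Rightarrow> real" where
  "hR K X = (SUP Y\<in>K. \<bar>\<Sum>p\<in>UNIV. \<Sum>q\<in>UNIV. X$p$q * Y$p$q\<bar>)"

definition hC :: "(complex^'p^'p) set \<Rightarrow> complex^'p^'p \<Rightarrow> real" where
  "hC K X = (SUP Y\<in>K. cmod (\<Sum>p\<in>UNIV. \<Sum>q\<in>UNIV. cnj (X$p$q) * Y$p$q))"

definition cplx_mat :: "real^'p^'q \<Rightarrow> complex^'p^'q" where
  "cplx_mat X = (\<chi> i j. complex_of_real (X$i$j))"

end

theory Submission
  imports Defs
begin



lemma t1:
  fixes a :: "'i::finite \<Rightarrow> 'j::finite \<Rightarrow> 'a::comm_ring_1"
  shows "(\<Sum>j\<in>UNIV. a i j * x4 j) * (\<Sum>j\<in>UNIV. a i j * x3 j) * (\<Sum>j\<in>UNIV. a i j * x2 j) * (\<Sum>j\<in>UNIV. a i j * x1 j)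
     = (\<Sum>j1\<in>UNIV. \<Sum>j2\<in>UNIV. \<Sum>j3\<in>UNIV. \<Sum>j4\<in>UNIV. a i j1 * a i j2 * a i j3 * a i j4 * x1 j1 * x2 j2 * x3 j3 * x4 j4)"
  apply (simp only: sum_distrib_left sum_distrib_right)
  by (rule sum.cong[OF refl])+ (simp add: mult_ac)

lemma rearr4:
  fixes a :: "'i::finite \<Rightarrow> 'j::finite \<Rightarrow> 'a::comm_ring_1"
  shows "(\<Sum>j1\<in>UNIV. \<Sum>j2\<in>UNIV. \<Sum>j3\<in>UNIV. \<Sum>j4\<in>UNIV.
           (\<Sum>i\<in>UNIV. a i j1 * a i j2 * a i j3 * a i j4) * x1 j1 * x2 j2 * x3 j3 * x4 j4)
       = (\<Sum>i\<in>UNIV. (\<Sum>j\<in>UNIV. a i j * x1 j) * (\<Sum>j\<in>UNIV. a i j * x2 j) * (\<Sum>j\<in>UNIV. a i j * x3 j) * (\<Sum>j\<in>UNIV. a i j * x4 j))"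
proof -
  have "(\<Sum>i\<in>UNIV. (\<Sum>j\<in>UNIV. a i j * x1 j) * (\<Sum>j\<in>UNIV. a i j * x2 j) * (\<Sum>j\<in>UNIV. a i j * x3 j) * (\<Sum>j\<in>UNIV. a i j * x4 j))
     = (\<Sum>i\<in>UNIV. \<Sum>j1\<in>UNIV. \<Sum>j2\<in>UNIV. \<Sum>j3\<in>UNIV. \<Sum>j4\<in>UNIV. a i j1 * a i j2 * a i j3 * a i j4 * x1 j1 * x2 j2 * x3 j3 * x4 j4)"
    by (rule sum.cong[OF refl], subst t1[symmetric]) (simp only: mult_ac)
  also have "\<dots> = (\<Sum>j1\<in>UNIV. \<Sum>j2\<in>UNIV. \<Sum>j3\<in>UNIV. \<Sum>j4\<in>UNIV. \<Sum>i\<in>UNIV. a i j1 * a i j2 * a i j3 * a i j4 * x1 j1 * x2 j2 * x3 j3 * x4 j4)"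
    by (rule trans[OF sum.swap], rule sum.cong[OF refl])+ simp
  finally show ?thesis by (simp only: sum_distrib_right)
qed

lemma rearr3:
  fixes a :: "'i::finite \<Rightarrow> 'j::finite \<Rightarrow> 'a::comm_ring_1"
  shows "(\<Sum>j1\<in>UNIV. \<Sum>j2\<in>UNIV. \<Sum>k\<in>UNIV.
           (\<Sum>i\<in>UNIV. a i j1 * a i j2 * (if k = i then 1 else 0)) * x1 j1 * x2 j2 * z k)
       = (\<Sum>i\<in>UNIV. (\<Sum>j\<in>UNIV. a i j * x1 j) * (\<Sum>j\<in>UNIV. a i j * x2 j) * z i)"
proof -
  have "(\<Sum>j1\<in>UNIV. \<Sum>j2\<in>UNIV. \<Sum>k\<in>UNIV.
           (\<Sum>i\<in>UNIV. a i j1 * a i j2 * (if k = i then 1 else 0)) * x1 j1 * x2 j2 * z k)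
    = (\<Sum>j1\<in>UNIV. \<Sum>j2\<in>UNIV. \<Sum>k\<in>UNIV. a k j1 * a k j2 * x1 j1 * x2 j2 * z k)"
    by (simp add: if_distrib cong: if_cong)
  also have "\<dots> = (\<Sum>k\<in>UNIV. \<Sum>j1\<in>UNIV. \<Sum>j2\<in>UNIV. a k j1 * a k j2 * x1 j1 * x2 j2 * z k)"
    apply (rule sym, rule trans[OF sum.swap], rule sum.cong[OF refl])
    apply (rule sum.swap) done
  also have "\<dots> = (\<Sum>i\<in>UNIV. (\<Sum>j\<in>UNIV. a i j * x1 j) * (\<Sum>j\<in>UNIV. a i j * x2 j) * z i)"
    apply (rule sum.cong[OF refl])
    apply (subst sum_product) apply (simp only: sum_distrib_right)
    by (rule sum.cong[OF refl])+ (simp add: mult_ac)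
  finally show ?thesis .
qed



definition dr :: "real^'n^'m \<Rightarrow> 'm \<Rightarrow> real^'n \<Rightarrow> real" where
  "dr A i x = (\<Sum>j\<in>UNIV. A$i$j * x$j)"
definition FF :: "real^'n^'m \<Rightarrow> real^'n \<Rightarrow> real" where
  "FF A x = (\<Sum>i\<in>UNIV. dr A i x ^ 4)"

lemma dr_scale: "dr A i (c *\<^sub>R x) = c * dr A i x"
  by (simp add: dr_def sum_distrib_left mult_ac)

lemma FF_scale: "FF A (c *\<^sub>R x) = c^4 * FF A x"
  by (simp add: FF_def dr_scale power_mult_distrib sum_distrib_left)

lemma FF_nonneg: "FF A x \<ge> 0"
  unfolding FF_def by (intro sum_nonneg) simp

lemma FF_max: "\<exists>x0::real^'n. norm x0 = 1 \<and> (\<forall>y. norm y = 1 \<longrightarrow> FF A y \<le> FF A x0)"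
proof -
  obtain k :: 'n where True by simp
  have ne: "sphere (0::real^'n) 1 \<noteq> {}"
    using norm_axis_1[of k] by (metis empty_iff mem_sphere_0)
  have c: "continuous_on (sphere (0::real^'n) 1) (FF A)"
    unfolding FF_def dr_def by (intro continuous_intros)
  from continuous_attains_sup[OF compact_sphere ne c] show ?thesis by auto
qed

lemma FF_bound:
  assumes "norm x0 = 1" "\<forall>y. norm y = 1 \<longrightarrow> FF A y \<le> FF A x0"
  shows "FF A x \<le> FF A x0 * norm x ^ 4"
proof (cases "x = 0")
  case True then show ?thesis by (simp add: FF_def dr_def)
next
  case False
  hence n: "norm x > 0" by simp
  have "FF A ((1/norm x) *\<^sub>R x) \<le> FF A x0" using assms(2) False by simp
  hence "(1/norm x)^4 * FF A x \<le> FF A x0" by (simp add: FF_scale)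
  hence "FF A x \<le> FF A x0 * norm x ^4" using n by (simp add: field_simps)
  then show ?thesis .
qed

lemma amgm2: fixes x y :: real shows "2*\<bar>x*y\<bar> \<le> x^2+y^2"
proof -
  have "0 \<le> (\<bar>x\<bar>-\<bar>y\<bar>)^2" by simp
  thus ?thesis by (simp add: power2_eq_square abs_mult algebra_simps abs_mult_self)
qed

lemma amgm4:
  fixes a b c d :: real
  shows "\<bar>a*b*c*d\<bar> \<le> (a^4+b^4+c^4+d^4)/4"
proof -
  have 1: "2*\<bar>(a*b)*(c*d)\<bar> \<le> (a*b)^2+(c*d)^2" by (rule amgm2)
  have 2: "2*\<bar>a^2*b^2\<bar> \<le> (a^2)^2+(b^2)^2" by (rule amgm2)
  have 3: "2*\<bar>c^2*d^2\<bar> \<le> (c^2)^2+(d^2)^2" by (rule amgm2)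
  have e: "(a*b)^2 = \<bar>a^2*b^2\<bar>" "(c*d)^2 = \<bar>c^2*d^2\<bar>" "(a^2)^2 = a^4" "(b^2)^2 = b^4" "(c^2)^2 = c^4" "(d^2)^2 = d^4"
    by (simp_all add: power_mult_distrib flip: power_mult)
  show ?thesis using 1 2 3 unfolding e by (simp add: mult.assoc)
qed


definition dc :: "real^'n^'m \<Rightarrow> 'm \<Rightarrow> complex^'n \<Rightarrow> complex" where
  "dc A i x = (\<Sum>j\<in>UNIV. complex_of_real (A$i$j) * x$j)"
definition GG :: "real^'n^'m \<Rightarrow> complex^'n \<Rightarrow> real" where
  "GG A x = (\<Sum>i\<in>UNIV. cmod (dc A i x) ^ 4)"

lemma normsq_real: "norm (u::real^'n) ^ 2 = (\<Sum>j\<in>UNIV. (u$j)^2)"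
  unfolding norm_vec_def L2_set_def by (simp add: sum_nonneg)

lemma normsq_cplx: "norm (x::complex^'n) ^ 2 = (\<Sum>j\<in>UNIV. cmod (x$j)^2)"
  unfolding norm_vec_def L2_set_def by (simp add: sum_nonneg)

lemma GG_bound:
  fixes A :: "real^'n^'m" and x :: "complex^'n"
  assumes N: "\<And>y. FF A y \<le> N * norm y ^ 4" and N0: "N \<ge> 0"
  shows "GG A x \<le> N * norm x ^ 4"
proof -
  define u :: "real^'n" where "u = (\<chi> j. Re (x$j))"
  define v :: "real^'n" where "v = (\<chi> j. Im (x$j))"
  define p where "p i = dr A i u" for i
  define q where "q i = dr A i v" for i
  have re: "Re (dc A i x) = p i" for i by (simp add: dc_def p_def dr_def u_def Re_sum)
  have im: "Im (dc A i x) = q i" for i by (simp add: dc_def q_def dr_def v_def Im_sum)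
  have c4: "cmod (dc A i x) ^ 4 = p i ^ 4 + q i ^ 4 + 2 * (p i ^ 2 * q i ^ 2)" for i
  proof -
    have "cmod (dc A i x) ^ 4 = (cmod (dc A i x) ^ 2)^2" by simp
    also have "\<dots> = (p i ^ 2 + q i ^ 2)^2" by (simp add: cmod_power2 re im)
    finally show ?thesis by (simp add: power2_sum power_mult_distrib flip: power_mult)
  qed
  have G: "GG A x = FF A u + FF A v + 2 * (\<Sum>i\<in>UNIV. p i ^ 2 * q i ^ 2)"
    by (simp add: GG_def FF_def c4 sum.distrib sum_distrib_left p_def q_def)
  have nx: "norm x ^ 2 = norm u ^ 2 + norm v ^ 2"
    by (simp add: normsq_cplx normsq_real u_def v_def cmod_power2 sum.distrib)
  have "(\<Sum>i\<in>UNIV. p i ^ 2 * q i ^ 2) = (\<Sum>i\<in>UNIV. \<bar>p i ^ 2\<bar> * \<bar>q i ^ 2\<bar>)" by simp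
  also have "\<dots> \<le> L2_set (\<lambda>i. p i ^ 2) UNIV * L2_set (\<lambda>i. q i ^ 2) UNIV"
    by (rule L2_set_mult_ineq)
  also have "L2_set (\<lambda>i. p i ^ 2) UNIV = sqrt (FF A u)"
    by (simp add: L2_set_def FF_def p_def flip: power_mult)
  also have "L2_set (\<lambda>i. q i ^ 2) UNIV = sqrt (FF A v)"
    by (simp add: L2_set_def FF_def q_def flip: power_mult)
  also have "sqrt (FF A u) * sqrt (FF A v) \<le> sqrt (N * norm u ^ 4) * sqrt (N * norm v ^ 4)"
    by (intro mult_mono real_sqrt_le_mono N) (auto simp: FF_nonneg N0)
  also have "sqrt (N * norm u ^ 4) * sqrt (N * norm v ^ 4) = N * (norm u ^ 2 * norm v ^ 2)"
  proof -
    have "sqrt (N * norm u ^ 4) * sqrt (N * norm v ^ 4) = sqrt ((N * (norm u ^ 2 * norm v ^ 2))^2)"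
      by (simp add: real_sqrt_mult[symmetric] power_mult_distrib flip: power_mult) (simp add: algebra_simps power2_eq_square)
    also have "\<dots> = N * (norm u ^ 2 * norm v ^ 2)" using N0 by simp
    finally show ?thesis .
  qed
  finally have S: "(\<Sum>i\<in>UNIV. p i ^ 2 * q i ^ 2) \<le> N * (norm u ^ 2 * norm v ^ 2)" .
  have "GG A x \<le> N * norm u ^ 4 + N * norm v ^ 4 + 2 * (N * (norm u ^ 2 * norm v ^ 2))"
    unfolding G using N[of u] N[of v] S by linarith
  also have "\<dots> = N * (norm u ^ 2 + norm v ^ 2)^2" by (simp add: power2_sum algebra_simps flip: power_mult)
  also have "\<dots> = N * norm x ^ 4" by (simp add: nx[symmetric] flip: power_mult)
  finally show ?thesis .
qed


lemma pow4_abs: "\<bar>r::real\<bar> ^ 4 = r ^ 4" by (simp add: power_even_abs)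

lemma sum_pow4_abs: "(\<Sum>i\<in>UNIV. \<bar>(A *v x) $ i\<bar> ^ 4) = FF A x"
  by (simp add: FF_def dr_def matrix_vector_mult_def pow4_abs)

lemma P1:
  fixes A :: "real^'n^'m"
  assumes Nb: "\<And>y. FF A y \<le> N * norm y ^ 4" and x0: "norm x0 = 1" "FF A x0 = N"
  shows "norm_2to4 A = N powr (1/4)"
proof -
  have N0: "N \<ge> 0" using x0 FF_nonneg by metis
  have l4: "l4norm (A *v x) = FF A x powr (1/4)" for x
    unfolding l4norm_def sum_pow4_abs ..
  show ?thesis unfolding norm_2to4_def
  proof (rule cSup_eq_maximum)
    show "N powr (1/4) \<in> (\<lambda>x. l4norm (A *v x) / norm x) ` {x. x \<noteq> 0}"
      using x0 by (intro image_eqI[where x=x0]) (auto simp: l4)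
  next
    fix r assume "r \<in> (\<lambda>x. l4norm (A *v x) / norm x) ` {x. x \<noteq> 0}"
    then obtain x where x: "x \<noteq> 0" "r = FF A x powr (1/4) / norm x" by (auto simp: l4)
    have "FF A x powr (1/4) \<le> (N * norm x ^ 4) powr (1/4)"
      by (rule powr_mono2) (auto simp: FF_nonneg Nb)
    also have "\<dots> = N powr (1/4) * norm x"
    proof -
      have "(norm x ^ 4) powr (1/4) = norm x"
      proof -
        have "norm x ^ 4 = norm x powr (real 4)" by (subst powr_realpow') auto
        hence "(norm x ^ 4) powr (1/4) = norm x powr (real 4 * (1/4))" by (simp only: powr_powr)
        thus ?thesis by simp
      qed
      thus ?thesis using N0 by (simp add: powr_mult)
    qed
    finally show "r \<le> N powr (1/4)" using x by (simp add: divide_le_eq)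
  qed
qed


lemma sum4R: "(\<Sum>j1\<in>UNIV. \<Sum>j2\<in>UNIV. \<Sum>j3\<in>UNIV. \<Sum>j4\<in>UNIV.
         tensA4 A j1 j2 j3 j4 * x1$j1 * x2$j2 * x3$j3 * x4$j4)
   = (\<Sum>i\<in>UNIV. dr A i x1 * dr A i x2 * dr A i x3 * dr A i x4)"
  unfolding tensA4_def dr_def by (rule rearr4)

lemma FF_sum4: "(\<Sum>i\<in>UNIV. dr A i x * dr A i x * dr A i x * dr A i x) = FF A x"
  unfolding FF_def by (simp add: power4_eq_xxxx)

lemma P2:
  fixes A :: "real^'n^'m"
  assumes Nb: "\<And>y. FF A y \<le> N * norm y ^ 4" and x0: "norm x0 = 1" "FF A x0 = N"
  shows "inj4 (tensA4 A) = N"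
proof -
  have N0: "N \<ge> 0" using x0 FF_nonneg by metis
  show ?thesis unfolding inj4_def
  proof (rule cSup_eq_maximum)
    show "N \<in> (\<lambda>(x1,x2,x3,x4). \<bar>\<Sum>j1\<in>UNIV. \<Sum>j2\<in>UNIV. \<Sum>j3\<in>UNIV. \<Sum>j4\<in>UNIV.
         tensA4 A j1 j2 j3 j4 * x1$j1 * x2$j2 * x3$j3 * x4$j4\<bar>) `
        {(x1::real^'n,x2::real^'n,x3::real^'n,x4::real^'n).
      norm x1 = 1 \<and> norm x2 = 1 \<and> norm x3 = 1 \<and> norm x4 = 1}"
      using x0 N0 by (intro image_eqI[where x="(x0,x0,x0,x0)"]) (auto simp: sum4R FF_sum4)
  next
    fix r assume "r \<in> (\<lambda>(x1,x2,x3,x4). \<bar>\<Sum>j1\<in>UNIV. \<Sum>j2\<in>UNIV. \<Sum>j3\<in>UNIV. \<Sum>j4\<in>UNIV.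
         tensA4 A j1 j2 j3 j4 * x1$j1 * x2$j2 * x3$j3 * x4$j4\<bar>) `
        {(x1::real^'n,x2::real^'n,x3::real^'n,x4::real^'n).
      norm x1 = 1 \<and> norm x2 = 1 \<and> norm x3 = 1 \<and> norm x4 = 1}"
    then obtain x1 x2 x3 x4 :: "real^'n" where n: "norm x1 = 1" "norm x2 = 1" "norm x3 = 1" "norm x4 = 1"
      and r: "r = \<bar>\<Sum>i\<in>UNIV. dr A i x1 * dr A i x2 * dr A i x3 * dr A i x4\<bar>"
      by (auto simp: sum4R)
    have "r \<le> (\<Sum>i\<in>UNIV. \<bar>dr A i x1 * dr A i x2 * dr A i x3 * dr A i x4\<bar>)"
      unfolding r by (rule sum_abs)
    also have "\<dots> \<le> (\<Sum>i\<in>UNIV. (dr A i x1^4 + dr A i x2^4 + dr A i x3^4 + dr A i x4^4)/4)"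
      by (intro sum_mono amgm4)
    also have "\<dots> = (FF A x1 + FF A x2 + FF A x3 + FF A x4)/4"
      by (simp add: FF_def sum.distrib flip: sum_divide_distrib)
    also have "\<dots> \<le> N" using Nb[of x1] Nb[of x2] Nb[of x3] Nb[of x4] n by simp
    finally show "r \<le> N" .
  qed
qed

lemma sum3R: "(\<Sum>j1\<in>UNIV. \<Sum>j2\<in>UNIV. \<Sum>k\<in>UNIV.
         tensA3 A j1 j2 k * x1$j1 * x2$j2 * z$k)
   = (\<Sum>i\<in>UNIV. dr A i x1 * dr A i x2 * z$i)"
  unfolding tensA3_def dr_def by (rule rearr3)

lemma vec_real_norm: "norm (z::real^'m) = L2_set (\<lambda>i. z$i) UNIV"
  unfolding norm_vec_def L2_set_def by simp

lemma z0_exists: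
  fixes A :: "real^'n^'m"
  assumes x0: "FF A x0 = N"
  shows "\<exists>z::real^'m. norm z = 1 \<and> (\<Sum>i\<in>UNIV. dr A i x0 * dr A i x0 * z$i) = sqrt N"
proof (cases "N = 0")
  case True
  obtain k :: 'm where True by simp
  have "\<forall>i\<in>UNIV. dr A i x0 ^ 4 = 0"
    using x0 True sum_nonneg_eq_0_iff[of UNIV "\<lambda>i. dr A i x0 ^ 4"] by (simp add: FF_def)
  hence "dr A i x0 = 0" for i by simp
  thus ?thesis using True by (intro exI[where x="axis k 1"]) simp
next
  case False
  define w :: "real^'m" where "w = (\<chi> i. dr A i x0 * dr A i x0)"
  have nw: "norm w = sqrt N"
    using x0 by (simp add: vec_real_norm L2_set_def w_def FF_def power2_eq_square power4_eq_xxxx mult_ac)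
  have N0: "N > 0" using False x0 FF_nonneg by (metis less_eq_real_def)
  show ?thesis
  proof (intro exI[where x="(1/sqrt N) *\<^sub>R w"] conjI)
    show "norm ((1/sqrt N) *\<^sub>R w) = 1" using nw N0 by simp
    have "(\<Sum>i\<in>UNIV. dr A i x0 * dr A i x0 * ((1/sqrt N) *\<^sub>R w)$i) = (1/sqrt N) * (\<Sum>i\<in>UNIV. w$i * w$i)"
      by (simp add: w_def sum_distrib_left mult_ac)
    also have "(\<Sum>i\<in>UNIV. w$i * w$i) = N"
      using nw N0 unfolding vec_real_norm L2_set_def by (simp add: power2_eq_square)
    also have "(1/sqrt N) * N = sqrt N" using N0 by (simp add: field_simps real_div_sqrt)
    finally show "(\<Sum>i\<in>UNIV. dr A i x0 * dr A i x0 * ((1/sqrt N) *\<^sub>R w)$i) = sqrt N" .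
  qed
qed

lemma P3:
  fixes A :: "real^'n^'m"
  assumes Nb: "\<And>y. FF A y \<le> N * norm y ^ 4" and x0: "norm x0 = 1" "FF A x0 = N"
  shows "inj3 (tensA3 A) = sqrt N"
proof -
  have N0: "N \<ge> 0" using x0 FF_nonneg by metis
  obtain z0 :: "real^'m" where z0: "norm z0 = 1" "(\<Sum>i\<in>UNIV. dr A i x0 * dr A i x0 * z0$i) = sqrt N"
    using z0_exists[OF x0(2)] by blast
  show ?thesis unfolding inj3_def
  proof (rule cSup_eq_maximum)
    show "sqrt N \<in> (\<lambda>(x1,x2,x3). \<bar>\<Sum>j1\<in>UNIV. \<Sum>j2\<in>UNIV. \<Sum>j3\<in>UNIV. tensA3 A j1 j2 j3 * x1$j1 * x2$j2 * x3$j3\<bar>) `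
      {(x1::real^'n,x2::real^'n,x3::real^'m). norm x1 = 1 \<and> norm x2 = 1 \<and> norm x3 = 1}"
      using x0 z0 N0 by (intro image_eqI[where x="(x0,x0,z0)"]) (auto simp: sum3R)
  next
    fix r assume "r \<in> (\<lambda>(x1,x2,x3). \<bar>\<Sum>j1\<in>UNIV. \<Sum>j2\<in>UNIV. \<Sum>j3\<in>UNIV. tensA3 A j1 j2 j3 * x1$j1 * x2$j2 * x3$j3\<bar>) `
      {(x1::real^'n,x2::real^'n,x3::real^'m). norm x1 = 1 \<and> norm x2 = 1 \<and> norm x3 = 1}"
    then obtain x1 x2 :: "real^'n" and z :: "real^'m" where n: "norm x1 = 1" "norm x2 = 1" "norm z = 1"
      and r: "r = \<bar>\<Sum>i\<in>UNIV. dr A i x1 * dr A i x2 * z$i\<bar>"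
      by (auto simp: sum3R)
    have "r \<le> (\<Sum>i\<in>UNIV. \<bar>dr A i x1 * dr A i x2\<bar> * \<bar>z$i\<bar>)"
      unfolding r abs_mult[symmetric] by (rule sum_abs)
    also have "\<dots> \<le> L2_set (\<lambda>i. dr A i x1 * dr A i x2) UNIV * L2_set (\<lambda>i. z$i) UNIV"
      by (rule L2_set_mult_ineq)
    also have "L2_set (\<lambda>i. z$i) UNIV = 1" using n(3) by (simp add: vec_real_norm)
    also have "L2_set (\<lambda>i. dr A i x1 * dr A i x2) UNIV \<le> sqrt N"
      unfolding L2_set_def
    proof (rule real_sqrt_le_mono)
      have "(\<Sum>i\<in>UNIV. (dr A i x1 * dr A i x2)^2) \<le> (\<Sum>i\<in>UNIV. (dr A i x1^4 + dr A i x2^4)/2)"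
      proof (rule sum_mono)
        fix i
        have "2 * \<bar>dr A i x1 ^ 2 * dr A i x2 ^ 2\<bar> \<le> (dr A i x1 ^ 2)^2 + (dr A i x2 ^ 2)^2" by (rule amgm2)
        thus "(dr A i x1 * dr A i x2)^2 \<le> (dr A i x1^4 + dr A i x2^4)/2"
          by (simp add: power_mult_distrib flip: power_mult)
      qed
      also have "\<dots> = (FF A x1 + FF A x2)/2" by (simp add: FF_def sum.distrib flip: sum_divide_distrib)
      also have "\<dots> \<le> N" using Nb[of x1] Nb[of x2] n by simp
      finally show "(\<Sum>i\<in>UNIV. (dr A i x1 * dr A i x2)^2) \<le> N" .
    qed
    finally show "r \<le> sqrt N" by simp
  qed
qed


definition ce :: "real^'n \<Rightarrow> complex^'n" where "ce x = (\<chi> j. complex_of_real (x$j))"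

lemma norm_ce: "norm (ce x) = norm x"
  by (simp add: ce_def norm_vec_def)

lemma dc_ce: "dc A i (ce x) = complex_of_real (dr A i x)"
  by (simp add: dc_def dr_def ce_def)

lemma sum4C: "(\<Sum>j1\<in>UNIV. \<Sum>j2\<in>UNIV. \<Sum>j3\<in>UNIV. \<Sum>j4\<in>UNIV.
         cnj (complex_of_real (tensA4 A j1 j2 j3 j4)) * x1$j1 * x2$j2 * x3$j3 * x4$j4)
   = (\<Sum>i\<in>UNIV. dc A i x1 * dc A i x2 * dc A i x3 * dc A i x4)"
proof -
  have eq: "cnj (complex_of_real (tensA4 A j1 j2 j3 j4)) = (\<Sum>i\<in>UNIV. complex_of_real (A$i$j1) *
     complex_of_real (A$i$j2) * complex_of_real (A$i$j3) * complex_of_real (A$i$j4))" for j1 j2 j3 j4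
    by (simp add: tensA4_def)
  show ?thesis unfolding eq dc_def by (rule rearr4)
qed

lemma sum4C': "(\<Sum>j1\<in>UNIV. \<Sum>j2\<in>UNIV. \<Sum>j3\<in>UNIV. \<Sum>j4\<in>UNIV.
         complex_of_real (tensA4 A j1 j2 j3 j4) * x1$j1 * x2$j2 * x3$j3 * x4$j4)
   = (\<Sum>i\<in>UNIV. dc A i x1 * dc A i x2 * dc A i x3 * dc A i x4)"
  using sum4C[of A x1 x2 x3 x4] by simp

lemma sum3C: "(\<Sum>j1\<in>UNIV. \<Sum>j2\<in>UNIV. \<Sum>k\<in>UNIV.
         cnj (complex_of_real (tensA3 A j1 j2 k)) * x1$j1 * x2$j2 * z$k)
   = (\<Sum>i\<in>UNIV. dc A i x1 * dc A i x2 * z$i)"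
proof -
  have eq: "cnj (complex_of_real (tensA3 A j1 j2 k)) = (\<Sum>i\<in>UNIV. complex_of_real (A$i$j1) *
     complex_of_real (A$i$j2) * (if k = i then 1 else 0))" for j1 j2 k
    unfolding tensA3_def by (simp add: if_distrib cong: if_cong)
  show ?thesis unfolding eq dc_def by (rule rearr3)
qed

lemma sum3C': "(\<Sum>j1\<in>UNIV. \<Sum>j2\<in>UNIV. \<Sum>k\<in>UNIV.
         complex_of_real (tensA3 A j1 j2 k) * x1$j1 * x2$j2 * z$k)
   = (\<Sum>i\<in>UNIV. dc A i x1 * dc A i x2 * z$i)"
  using sum3C[of A x1 x2 z] by simp

lemma P4:
  fixes A :: "real^'n^'m"
  assumes Nb: "\<And>y. GG A y \<le> N * norm y ^ 4" and x0: "norm x0 = 1" "FF A x0 = N" and N0: "N \<ge> 0"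
  shows "inj4C (tensA4 A) = N"
  unfolding inj4C_def
proof (rule cSup_eq_maximum)
  have "(\<Sum>i\<in>UNIV. complex_of_real (dr A i x0) * complex_of_real (dr A i x0) * complex_of_real (dr A i x0) * complex_of_real (dr A i x0)) = complex_of_real N"
    unfolding x0(2)[symmetric] FF_def by (simp add: power4_eq_xxxx of_real_sum of_real_mult)
  thus "N \<in> (\<lambda>(x1,x2,x3,x4). cmod (\<Sum>j1\<in>UNIV. \<Sum>j2\<in>UNIV. \<Sum>j3\<in>UNIV. \<Sum>j4\<in>UNIV.
         cnj (complex_of_real (tensA4 A j1 j2 j3 j4)) * x1$j1 * x2$j2 * x3$j3 * x4$j4)) `
      {(x1::complex^'n,x2::complex^'n,x3::complex^'n,x4::complex^'n).
      norm x1 = 1 \<and> norm x2 = 1 \<and> norm x3 = 1 \<and> norm x4 = 1}"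
    apply (intro image_eqI[where x="(ce x0,ce x0,ce x0,ce x0)"])
    apply (simp only: prod.case sum4C dc_ce) using N0 apply simp
    using x0 by (simp add: norm_ce)
next
  fix r assume "r \<in> (\<lambda>(x1,x2,x3,x4). cmod (\<Sum>j1\<in>UNIV. \<Sum>j2\<in>UNIV. \<Sum>j3\<in>UNIV. \<Sum>j4\<in>UNIV.
         cnj (complex_of_real (tensA4 A j1 j2 j3 j4)) * x1$j1 * x2$j2 * x3$j3 * x4$j4)) `
      {(x1::complex^'n,x2::complex^'n,x3::complex^'n,x4::complex^'n).
      norm x1 = 1 \<and> norm x2 = 1 \<and> norm x3 = 1 \<and> norm x4 = 1}"
  then obtain x1 x2 x3 x4 :: "complex^'n" where n: "norm x1 = 1" "norm x2 = 1" "norm x3 = 1" "norm x4 = 1"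
    and r: "r = cmod (\<Sum>i\<in>UNIV. dc A i x1 * dc A i x2 * dc A i x3 * dc A i x4)"
    by (auto simp: sum4C')
  have "r \<le> (\<Sum>i\<in>UNIV. cmod (dc A i x1 * dc A i x2 * dc A i x3 * dc A i x4))"
    unfolding r by (rule norm_sum)
  also have "\<dots> \<le> (\<Sum>i\<in>UNIV. (cmod (dc A i x1)^4 + cmod (dc A i x2)^4 + cmod (dc A i x3)^4 + cmod (dc A i x4)^4)/4)"
  proof (rule sum_mono)
    fix i
    have "cmod (dc A i x1 * dc A i x2 * dc A i x3 * dc A i x4)
       \<le> \<bar>cmod (dc A i x1) * cmod (dc A i x2) * cmod (dc A i x3) * cmod (dc A i x4)\<bar>"
      by (simp add: norm_mult)
    also have "\<dots> \<le> (cmod (dc A i x1)^4 + cmod (dc A i x2)^4 + cmod (dc A i x3)^4 + cmod (dc A i x4)^4)/4" by (rule amgm4)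
    finally show "cmod (dc A i x1 * dc A i x2 * dc A i x3 * dc A i x4) \<le> (cmod (dc A i x1)^4 + cmod (dc A i x2)^4 + cmod (dc A i x3)^4 + cmod (dc A i x4)^4)/4" .
  qed
  also have "\<dots> = (GG A x1 + GG A x2 + GG A x3 + GG A x4)/4"
    by (simp add: GG_def sum.distrib flip: sum_divide_distrib)
  also have "\<dots> \<le> N" using Nb[of x1] Nb[of x2] Nb[of x3] Nb[of x4] n by simp
  finally show "r \<le> N" .
qed

lemma P5:
  fixes A :: "real^'n^'m"
  assumes Nb: "\<And>y. GG A y \<le> N * norm y ^ 4" and x0: "norm x0 = 1" "FF A x0 = N" and N0: "N \<ge> 0"
  shows "inj3C (tensA3 A) = sqrt N"
  unfolding inj3C_def
proof (rule cSup_eq_maximum)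
  obtain z0 :: "real^'m" where z0: "norm z0 = 1" "(\<Sum>i\<in>UNIV. dr A i x0 * dr A i x0 * z0$i) = sqrt N"
    using z0_exists[OF x0(2)] by blast
  have eq: "(\<Sum>i\<in>UNIV. dc A i (ce x0) * dc A i (ce x0) * (ce z0)$i) = complex_of_real (sqrt N)"
    unfolding z0(2)[symmetric] dc_ce by (simp add: ce_def of_real_sum of_real_mult)
  show "sqrt N \<in> (\<lambda>(x1,x2,x3). cmod (\<Sum>j1\<in>UNIV. \<Sum>j2\<in>UNIV. \<Sum>j3\<in>UNIV.
         cnj (complex_of_real (tensA3 A j1 j2 j3)) * x1$j1 * x2$j2 * x3$j3)) `
      {(x1::complex^'n,x2::complex^'n,x3::complex^'m). norm x1 = 1 \<and> norm x2 = 1 \<and> norm x3 = 1}"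
    apply (intro image_eqI[where x="(ce x0,ce x0,ce z0)"])
    apply (simp only: prod.case sum3C eq) using N0 apply simp
    using x0 z0 by (simp add: norm_ce)
next
  fix r assume "r \<in> (\<lambda>(x1,x2,x3). cmod (\<Sum>j1\<in>UNIV. \<Sum>j2\<in>UNIV. \<Sum>j3\<in>UNIV.
         cnj (complex_of_real (tensA3 A j1 j2 j3)) * x1$j1 * x2$j2 * x3$j3)) `
      {(x1::complex^'n,x2::complex^'n,x3::complex^'m). norm x1 = 1 \<and> norm x2 = 1 \<and> norm x3 = 1}"
  then obtain x1 x2 :: "complex^'n" and z :: "complex^'m" where n: "norm x1 = 1" "norm x2 = 1" "norm z = 1"
    and r: "r = cmod (\<Sum>i\<in>UNIV. dc A i x1 * dc A i x2 * z$i)"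
    by (auto simp: sum3C')
  have "r \<le> (\<Sum>i\<in>UNIV. cmod (dc A i x1 * dc A i x2 * z$i))"
    unfolding r by (rule norm_sum)
  also have "\<dots> = (\<Sum>i\<in>UNIV. \<bar>cmod (dc A i x1) * cmod (dc A i x2)\<bar> * \<bar>cmod (z$i)\<bar>)"
    by (simp add: norm_mult)
  also have "\<dots> \<le> L2_set (\<lambda>i. cmod (dc A i x1) * cmod (dc A i x2)) UNIV * L2_set (\<lambda>i. cmod (z$i)) UNIV"
    by (rule L2_set_mult_ineq)
  also have "L2_set (\<lambda>i. cmod (z$i)) UNIV = 1" using n(3) by (simp add: norm_vec_def)
  also have "L2_set (\<lambda>i. cmod (dc A i x1) * cmod (dc A i x2)) UNIV \<le> sqrt N"
    unfolding L2_set_def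
  proof (rule real_sqrt_le_mono)
    have "(\<Sum>i\<in>UNIV. (cmod (dc A i x1) * cmod (dc A i x2))^2) \<le> (\<Sum>i\<in>UNIV. (cmod (dc A i x1)^4 + cmod (dc A i x2)^4)/2)"
    proof (rule sum_mono)
      fix i
      have "2 * \<bar>cmod (dc A i x1) ^ 2 * cmod (dc A i x2) ^ 2\<bar> \<le> (cmod (dc A i x1) ^ 2)^2 + (cmod (dc A i x2) ^ 2)^2" by (rule amgm2)
      thus "(cmod (dc A i x1) * cmod (dc A i x2))^2 \<le> (cmod (dc A i x1)^4 + cmod (dc A i x2)^4)/2"
        by (simp add: power_mult_distrib flip: power_mult)
    qed
    also have "\<dots> = (GG A x1 + GG A x2)/2" by (simp add: GG_def sum.distrib flip: sum_divide_distrib)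
    also have "\<dots> \<le> N" using Nb[of x1] Nb[of x2] n by simp
    finally show "(\<Sum>i\<in>UNIV. (cmod (dc A i x1) * cmod (dc A i x2))^2) \<le> N" .
  qed
  finally show "r \<le> sqrt N" by simp
qed


lemma sum_pair: "(\<Sum>p\<in>(UNIV::('a::finite\<times>'b::finite) set). f p) = (\<Sum>a\<in>UNIV. \<Sum>b\<in>UNIV. f (a,b))"
  by (subst UNIV_Times_UNIV[symmetric], subst sum.cartesian_product) simp

definition genR :: "real^'n \<Rightarrow> real^'n \<Rightarrow> real^('n::finite\<times>'n)^('n\<times>'n)" where
  "genR v1 v2 = (\<chi> p q. (v1$(fst p) * v1$(fst q)) * (v2$(snd p) * v2$(snd q)))"

definition genC :: "complex^'n \<Rightarrow> complex^'n \<Rightarrow> complex^('n::finite\<times>'n)^('n\<times>'n)" where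
  "genC v1 v2 = (\<chi> p q. (v1$(fst p) * cnj (v1$(fst q))) * (v2$(snd p) * cnj (v2$(snd q))))"

lemma LR_gen:
  fixes A :: "real^'n^'m"
  shows "(\<Sum>p\<in>UNIV. \<Sum>q\<in>UNIV. opA22 A $ p $ q * genR v1 v2 $ p $ q)
   = (\<Sum>i\<in>UNIV. dr A i v1 * dr A i v2 * dr A i v1 * dr A i v2)"
proof -
  have "(\<Sum>p\<in>UNIV. \<Sum>q\<in>UNIV. opA22 A $ p $ q * genR v1 v2 $ p $ q)
    = (\<Sum>j1\<in>UNIV. \<Sum>j2\<in>UNIV. \<Sum>j3\<in>UNIV. \<Sum>j4\<in>UNIV.
         (\<Sum>i\<in>UNIV. A$i$j1 * A$i$j2 * A$i$j3 * A$i$j4) * v1$j1 * v2$j2 * v1$j3 * v2$j4)"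
    unfolding opA22_def genR_def by (simp add: sum_pair sum_distrib_right mult_ac)
  also have "\<dots> = (\<Sum>i\<in>UNIV. dr A i v1 * dr A i v2 * dr A i v1 * dr A i v2)"
    unfolding dr_def by (rule rearr4)
  finally show ?thesis .
qed

lemma cnj_dc: "(\<Sum>j\<in>UNIV. complex_of_real (A$i$j) * cnj (v$j)) = cnj (dc A i v)"
  by (simp add: dc_def)

lemma LC_gen:
  fixes A :: "real^'n^'m"
  shows "(\<Sum>p\<in>UNIV. \<Sum>q\<in>UNIV. cnj (cplx_mat (opA22 A) $ p $ q) * genC v1 v2 $ p $ q)
   = (\<Sum>i\<in>UNIV. dc A i v1 * dc A i v2 * cnj (dc A i v1) * cnj (dc A i v2))"
proof -
  have "(\<Sum>p\<in>UNIV. \<Sum>q\<in>UNIV. cnj (cplx_mat (opA22 A) $ p $ q) * genC v1 v2 $ p $ q)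
    = (\<Sum>j1\<in>UNIV. \<Sum>j2\<in>UNIV. \<Sum>j3\<in>UNIV. \<Sum>j4\<in>UNIV.
         (\<Sum>i\<in>UNIV. complex_of_real (A$i$j1) * complex_of_real (A$i$j2) * complex_of_real (A$i$j3) * complex_of_real (A$i$j4))
          * v1$j1 * v2$j2 * cnj (v1$j3) * cnj (v2$j4))"
    unfolding opA22_def genC_def cplx_mat_def by (simp add: sum_pair sum_distrib_right mult_ac of_real_sum)
  also have "\<dots> = (\<Sum>i\<in>UNIV. dc A i v1 * dc A i v2 * cnj (dc A i v1) * cnj (dc A i v2))"
    unfolding cnj_dc[symmetric] unfolding dc_def by (rule rearr4)
  finally show ?thesis .
qed


lemma hullR:
  fixes X :: "real^'p^'p"
  assumes S: "\<And>Y. Y \<in> S \<Longrightarrow> \<bar>\<Sum>p\<in>UNIV. \<Sum>q\<in>UNIV. X$p$q * Y$p$q\<bar> \<le> c"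
    and Y: "Y \<in> convex hull S"
  shows "\<bar>\<Sum>p\<in>UNIV. \<Sum>q\<in>UNIV. X$p$q * Y$p$q\<bar> \<le> c"
proof -
  let ?L = "\<lambda>Y::real^'p^'p. \<Sum>p\<in>UNIV. \<Sum>q\<in>UNIV. X$p$q * Y$p$q"
  have lin: "?L (u *\<^sub>R a + v *\<^sub>R b) = u * ?L a + v * ?L b" for u v a b
    by (simp add: sum.distrib sum_distrib_left algebra_simps)
  have "convex {Y. \<bar>?L Y\<bar> \<le> c}"
    unfolding convex_def
  proof (intro ballI allI impI)
    fix a b u v assume a: "a \<in> {Y. \<bar>?L Y\<bar> \<le> c}" and b: "b \<in> {Y. \<bar>?L Y\<bar> \<le> c}"
      and uv: "0 \<le> (u::real)" "0 \<le> v" "u + v = 1"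
    have "\<bar>?L (u *\<^sub>R a + v *\<^sub>R b)\<bar> \<le> u * \<bar>?L a\<bar> + v * \<bar>?L b\<bar>"
      unfolding lin using uv by (simp add: abs_triangle_ineq[THEN order_trans] abs_mult)
    also have "\<dots> \<le> u * c + v * c" using a b uv by (intro add_mono mult_left_mono) auto
    also have "\<dots> = c" using uv by (metis distrib_right mult_1_left)
    finally show "u *\<^sub>R a + v *\<^sub>R b \<in> {Y. \<bar>?L Y\<bar> \<le> c}" by simp
  qed
  hence "convex hull S \<subseteq> {Y. \<bar>?L Y\<bar> \<le> c}" using S by (intro hull_minimal) auto
  thus ?thesis using Y by auto
qed

lemma hullC:
  fixes X :: "complex^'p^'p"
  assumes S: "\<And>Y. Y \<in> S \<Longrightarrow> cmod (\<Sum>p\<in>UNIV. \<Sum>q\<in>UNIV. cnj (X$p$q) * Y$p$q) \<le> c"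
    and Y: "Y \<in> convex hull S"
  shows "cmod (\<Sum>p\<in>UNIV. \<Sum>q\<in>UNIV. cnj (X$p$q) * Y$p$q) \<le> c"
proof -
  let ?L = "\<lambda>Y::complex^'p^'p. \<Sum>p\<in>UNIV. \<Sum>q\<in>UNIV. cnj (X$p$q) * Y$p$q"
  have lin: "?L (u *\<^sub>R a + v *\<^sub>R b) = complex_of_real u * ?L a + complex_of_real v * ?L b" for u v a b
  proof -
    have comp: "(w *\<^sub>R (c::complex^'p^'p))$p$q = complex_of_real w * c$p$q" for w c p q
      by (simp only: vector_scaleR_component) (simp add: scaleR_conv_of_real)
    show ?thesis unfolding vector_add_component comp by (simp add: sum.distrib sum_distrib_left algebra_simps)
  qed
  have "convex {Y. cmod (?L Y) \<le> c}"
    unfolding convex_def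
  proof (intro ballI allI impI)
    fix a b u v assume a: "a \<in> {Y. cmod (?L Y) \<le> c}" and b: "b \<in> {Y. cmod (?L Y) \<le> c}"
      and uv: "0 \<le> (u::real)" "0 \<le> v" "u + v = 1"
    have "cmod (?L (u *\<^sub>R a + v *\<^sub>R b)) \<le> u * cmod (?L a) + v * cmod (?L b)"
      unfolding lin using uv norm_triangle_ineq[of "complex_of_real u * ?L a" "complex_of_real v * ?L b"]
      by (simp add: norm_mult)
    also have "\<dots> \<le> u * c + v * c" using a b uv by (intro add_mono mult_left_mono) auto
    also have "\<dots> = c" using uv by (metis distrib_right mult_1_left)
    finally show "u *\<^sub>R a + v *\<^sub>R b \<in> {Y. cmod (?L Y) \<le> c}" by simp
  qed
  hence "convex hull S \<subseteq> {Y. cmod (?L Y) \<le> c}" using S by (intro hull_minimal) auto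
  thus ?thesis using Y by auto
qed


lemma genR_bound:
  fixes A :: "real^'n^'m"
  assumes Nb: "\<And>y. FF A y \<le> N * norm y ^ 4" and n: "norm v1 = 1" "norm v2 = 1"
  shows "\<bar>\<Sum>p\<in>UNIV. \<Sum>q\<in>UNIV. opA22 A $ p $ q * genR v1 v2 $ p $ q\<bar> \<le> N"
  unfolding LR_gen
proof -
  have "\<bar>\<Sum>i\<in>UNIV. dr A i v1 * dr A i v2 * dr A i v1 * dr A i v2\<bar> \<le> (\<Sum>i\<in>UNIV. \<bar>dr A i v1 * dr A i v2 * dr A i v1 * dr A i v2\<bar>)"
    by (rule sum_abs)
  also have "\<dots> \<le> (\<Sum>i\<in>UNIV. (dr A i v1^4 + dr A i v2^4 + dr A i v1^4 + dr A i v2^4)/4)"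
    by (intro sum_mono amgm4)
  also have "\<dots> = (FF A v1 + FF A v2 + FF A v1 + FF A v2)/4"
    by (simp add: FF_def sum.distrib sum_distrib_left flip: sum_divide_distrib)
  also have "\<dots> \<le> N" using Nb[of v1] Nb[of v2] n by simp
  finally show "\<bar>\<Sum>i\<in>UNIV. dr A i v1 * dr A i v2 * dr A i v1 * dr A i v2\<bar> \<le> N" .
qed

lemma genC_bound:
  fixes A :: "real^'n^'m"
  assumes Nb: "\<And>y. GG A y \<le> N * norm y ^ 4" and n: "norm v1 = 1" "norm v2 = 1"
  shows "cmod (\<Sum>p\<in>UNIV. \<Sum>q\<in>UNIV. cnj (cplx_mat (opA22 A) $ p $ q) * genC v1 v2 $ p $ q) \<le> N"
  unfolding LC_gen
proof -
  have "cmod (\<Sum>i\<in>UNIV. dc A i v1 * dc A i v2 * cnj (dc A i v1) * cnj (dc A i v2))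
     \<le> (\<Sum>i\<in>UNIV. cmod (dc A i v1 * dc A i v2 * cnj (dc A i v1) * cnj (dc A i v2)))"
    by (rule norm_sum)
  also have "\<dots> \<le> (\<Sum>i\<in>UNIV. (cmod (dc A i v1)^4 + cmod (dc A i v2)^4 + cmod (dc A i v1)^4 + cmod (dc A i v2)^4)/4)"
  proof (rule sum_mono)
    fix i
    have "cmod (dc A i v1 * dc A i v2 * cnj (dc A i v1) * cnj (dc A i v2))
       \<le> \<bar>cmod (dc A i v1) * cmod (dc A i v2) * cmod (dc A i v1) * cmod (dc A i v2)\<bar>"
      by (simp add: norm_mult)
    also have "\<dots> \<le> (cmod (dc A i v1)^4 + cmod (dc A i v2)^4 + cmod (dc A i v1)^4 + cmod (dc A i v2)^4)/4"
      by (rule amgm4)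
    finally show "cmod (dc A i v1 * dc A i v2 * cnj (dc A i v1) * cnj (dc A i v2)) \<le> (cmod (dc A i v1)^4 + cmod (dc A i v2)^4 + cmod (dc A i v1)^4 + cmod (dc A i v2)^4)/4" .
  qed
  also have "\<dots> = (GG A v1 + GG A v2 + GG A v1 + GG A v2)/4"
    by (simp add: GG_def sum.distrib sum_distrib_left flip: sum_divide_distrib)
  also have "\<dots> \<le> N" using Nb[of v1] Nb[of v2] n by simp
  finally show "cmod (\<Sum>i\<in>UNIV. dc A i v1 * dc A i v2 * cnj (dc A i v1) * cnj (dc A i v2)) \<le> N" .
qed

lemma P6:
  fixes A :: "real^'n^'m"
  assumes Nb: "\<And>y. FF A y \<le> N * norm y ^ 4" and x0: "norm x0 = 1" "FF A x0 = N" and N0: "N \<ge> 0"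
  shows "hR (SepR :: (real^('n\<times>'n)^('n\<times>'n)) set) (opA22 A) = N"
  unfolding hR_def
proof (rule cSup_eq_maximum)
  have mem: "genR x0 x0 \<in> (SepR :: (real^('n\<times>'n)^('n\<times>'n)) set)" unfolding SepR_def
    by (rule hull_inc) (use x0 in \<open>unfold genR_def, blast\<close>)
  show "N \<in> (\<lambda>Y. \<bar>\<Sum>p\<in>UNIV. \<Sum>q\<in>UNIV. opA22 A $ p $ q * Y $ p $ q\<bar>) ` SepR"
    by (rule image_eqI[OF _ mem]) (simp add: LR_gen FF_sum4 x0 N0)
next
  fix r assume "r \<in> (\<lambda>Y. \<bar>\<Sum>p\<in>UNIV. \<Sum>q\<in>UNIV. opA22 A $ p $ q * Y $ p $ q\<bar>) ` (SepR :: (real^('n\<times>'n)^('n\<times>'n)) set)"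
  then obtain Y :: "real^('n\<times>'n)^('n\<times>'n)" where Y: "Y \<in> SepR" "r = \<bar>\<Sum>p\<in>UNIV. \<Sum>q\<in>UNIV. opA22 A $ p $ q * Y $ p $ q\<bar>"
    by auto
  have "\<bar>\<Sum>p\<in>UNIV. \<Sum>q\<in>UNIV. opA22 A $ p $ q * Y $ p $ q\<bar> \<le> N"
    apply (rule hullR[OF _ Y(1)[unfolded SepR_def]])
    apply clarify
    apply (simp only: genR_def[symmetric])
    apply (rule genR_bound[OF Nb]; assumption)
    done
  thus "r \<le> N" using Y by simp
qed

lemma P7:
  fixes A :: "real^'n^'m"
  assumes Nb: "\<And>y. GG A y \<le> N * norm y ^ 4" and x0: "norm x0 = 1" "FF A x0 = N" and N0: "N \<ge> 0"
  shows "hC (SepC :: (complex^('n\<times>'n)^('n\<times>'n)) set) (cplx_mat (opA22 A)) = N"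
  unfolding hC_def
proof (rule cSup_eq_maximum)
  have mem: "genC (ce x0) (ce x0) \<in> (SepC :: (complex^('n\<times>'n)^('n\<times>'n)) set)" 
  proof -
    have "norm (ce x0) = 1" using x0 norm_ce by metis
    thus ?thesis unfolding SepC_def genC_def by (intro hull_inc) blast
  qed
  have v: "(\<Sum>i\<in>UNIV. dc A i (ce x0) * dc A i (ce x0) * cnj (dc A i (ce x0)) * cnj (dc A i (ce x0))) = complex_of_real N"
    unfolding x0(2)[symmetric] FF_def dc_ce by (simp add: power4_eq_xxxx of_real_sum of_real_mult)
  show "N \<in> (\<lambda>Y. cmod (\<Sum>p\<in>UNIV. \<Sum>q\<in>UNIV. cnj (cplx_mat (opA22 A) $ p $ q) * Y $ p $ q)) ` SepC"
    by (rule image_eqI[OF _ mem]) (simp only: LC_gen v, simp add: N0)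
next
  fix r assume "r \<in> (\<lambda>Y. cmod (\<Sum>p\<in>UNIV. \<Sum>q\<in>UNIV. cnj (cplx_mat (opA22 A) $ p $ q) * Y $ p $ q)) ` (SepC :: (complex^('n\<times>'n)^('n\<times>'n)) set)"
  then obtain Y :: "complex^('n\<times>'n)^('n\<times>'n)" where Y: "Y \<in> SepC" "r = cmod (\<Sum>p\<in>UNIV. \<Sum>q\<in>UNIV. cnj (cplx_mat (opA22 A) $ p $ q) * Y $ p $ q)"
    by blast
  have "cmod (\<Sum>p\<in>UNIV. \<Sum>q\<in>UNIV. cnj (cplx_mat (opA22 A) $ p $ q) * Y $ p $ q) \<le> N"
    apply (rule hullC[OF _ Y(1)[unfolded SepC_def]])
    apply clarify
    apply (simp only: genC_def[symmetric])
    apply (rule genC_bound[OF Nb]; assumption)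
    done
  thus "r \<le> N" using Y by simp
qed


theorem lemma9p3:
  fixes A :: "real^'n^'m"
  shows "norm_2to4 A ^ 4 = inj4 (tensA4 A)
       \<and> inj4 (tensA4 A) = inj3 (tensA3 A) ^ 2
       \<and> inj3 (tensA3 A) ^ 2 = inj4C (tensA4 A)
       \<and> inj4C (tensA4 A) = inj3C (tensA3 A) ^ 2
       \<and> inj3C (tensA3 A) ^ 2 = hR (SepR :: (real^('n\<times>'n)^('n\<times>'n)) set) (opA22 A)
       \<and> hR (SepR :: (real^('n\<times>'n)^('n\<times>'n)) set) (opA22 A)
           = hC (SepC :: (complex^('n\<times>'n)^('n\<times>'n)) set) (cplx_mat (opA22 A))"
proof -
  obtain x0 :: "real^'n" where x0: "norm x0 = 1" "\<forall>y. norm y = 1 \<longrightarrow> FF A y \<le> FF A x0"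
    using FF_max by blast
  define N where "N = FF A x0"
  have Nb: "\<And>y. FF A y \<le> N * norm y ^ 4" using FF_bound[OF x0] N_def by simp
  have N0: "N \<ge> 0" unfolding N_def by (rule FF_nonneg)
  have Gb: "\<And>y. GG A y \<le> N * norm y ^ 4" by (rule GG_bound[OF Nb N0])
  have xN: "FF A x0 = N" by (simp add: N_def)
  have e1: "norm_2to4 A ^ 4 = N"
  proof -
    have "norm_2to4 A ^ 4 = (N powr (1/4)) ^ 4" by (simp add: P1[OF Nb x0(1) xN])
    also have "\<dots> = (N powr (1/4)) powr (real 4)" by (subst powr_realpow') auto
    also have "\<dots> = N" using N0 by (simp add: powr_powr)
    finally show ?thesis .
  qed
  have e2: "inj4 (tensA4 A) = N" by (rule P2[OF Nb x0(1) xN])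
  have e3: "inj3 (tensA3 A) ^ 2 = N" using P3[OF Nb x0(1) xN] N0 by simp
  have e4: "inj4C (tensA4 A) = N" by (rule P4[OF Gb x0(1) xN N0])
  have e5: "inj3C (tensA3 A) ^ 2 = N" using P5[OF Gb x0(1) xN N0] N0 by simp
  have e6: "hR (SepR :: (real^('n\<times>'n)^('n\<times>'n)) set) (opA22 A) = N" by (rule P6[OF Nb x0(1) xN N0])
  have e7: "hC (SepC :: (complex^('n\<times>'n)^('n\<times>'n)) set) (cplx_mat (opA22 A)) = N" by (rule P7[OF Gb x0(1) xN N0])
  show ?thesis using e1 e2 e3 e4 e5 e6 e7 by simp
qed


end
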